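(* Let $\Omega$ be a finite set with $n$ elements, let $G \le \mathrm{Sym}(\Omega)$ be $t$-transitive with $t \geq 2$, let $u \in G$, $m = |\mathrm{supp}(u)|$, $\Delta \subseteq \mathrm{supp}(u)$, and $E = \{g^{-1} u g \mid g \in G_{(\Delta)}\}$. Then: (i) If $|\Delta| \le t-1$, then for every $\gamma \in \Omega \setminus \Delta$, $$|\{x \in E \mid \gamma^x = \gamma\}| = |E| \frac{n -m}{n-|\Delta|},\qquad |\{x \in E \mid \gamma^x \ne \gamma\}| = |E| \frac{m-|\Delta|}{n-|\Delta|}.$$ (ii) If $|\Delta| \le t-2$, then for all $\gamma, \delta \in \Omega \setminus \Delta$ with $\gamma \ne \delta$, $$|\{x \in E \mid \gamma \in \mathrm{fix}(x), \delta \in \mathrm{supp}(x)\}| = |E| \frac{(n-m)(m-|\Delta|)}{(n-|\Delta|)(n- |\Delta|-1)}.$$ (iii) If $|\Delta|=1$, then for all $\gamma \in \Omega \setminus \Delta$, $$|\{x \in E \mid \gamma^x \in \Delta \}| = |E| \frac{1}{n-1}.$$ (iv) If $|\Delta|=1$ and $t \ge 3$, then for all $\gamma, \delta \in \Omega \setminus \Delta$ with $\gamma \ne \delta$, $$|\{x\in E \mid \gamma^x = \delta\}| = |E|\frac{m-2}{(n-1)(n-2)}.$$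
   Context: Permutations act on the right, $\alpha\mapsto\alpha^x$. For $x\in\mathrm{Sym}(\Omega)$, $\mathrm{supp}(x)=\{\alpha\mid\alpha^x\ne\alpha\}$ and $\mathrm{fix}(x)=\{\alpha\mid\alpha^x=\alpha\}$. $G$ is $t$-transitive if it acts transitively on the set of ordered $t$-tuples of distinct points of $\Omega$. $G_{(\Delta)}$ denotes the pointwise stabilizer of $\Delta$ in $G$. *)

theory Defs
  imports Complex_Main "HOL-Combinatorics.Permutations"
begin

text \<open>Permutations are functions; the right action alpha^x is written x alpha,
  so the product x y (first x, then y) is the function y o x, and
  g^-1 u g is the function g o u o inv g.\<close>

definition perm_supp :: "('a \<Rightarrow> 'a) \<Rightarrow> 'a set" where
  "perm_supp x = {a. x a \<noteq> a}"

definition perm_fix :: "'a set \<Rightarrow> ('a \<Rightarrow> 'a) \<Rightarrow> 'a set" where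
  "perm_fix \<Omega> x = {a \<in> \<Omega>. x a = a}"

definition perm_group :: "'a set \<Rightarrow> ('a \<Rightarrow> 'a) set \<Rightarrow> bool" where
  "perm_group \<Omega> G \<longleftrightarrow> G \<subseteq> {p. p permutes \<Omega>} \<and> id \<in> G \<and>
     (\<forall>p\<in>G. \<forall>q\<in>G. p \<circ> q \<in> G) \<and> (\<forall>p\<in>G. inv p \<in> G)"

text \<open>t-transitivity (with the usual implicit convention t \<le> |Omega|).\<close>
definition t_transitive :: "nat \<Rightarrow> 'a set \<Rightarrow> ('a \<Rightarrow> 'a) set \<Rightarrow> bool" where
  "t_transitive t \<Omega> G \<longleftrightarrow> t \<le> card \<Omega> \<and>
     (\<forall>xs ys. distinct xs \<and> distinct ys \<and> length xs = t \<and> length ys = t \<and>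
        set xs \<subseteq> \<Omega> \<and> set ys \<subseteq> \<Omega> \<longrightarrow> (\<exists>g\<in>G. map g xs = ys))"

definition pw_stab :: "('a \<Rightarrow> 'a) set \<Rightarrow> 'a set \<Rightarrow> ('a \<Rightarrow> 'a) set" where
  "pw_stab G \<Delta> = {g \<in> G. \<forall>d\<in>\<Delta>. g d = d}"

end

theory Submission
  imports Defs
begin


lemma conj_app: "inj h \<Longrightarrow> (h \<circ> x \<circ> inv h) (h y) = h (x y)"
  by simp

lemma conj_inj: assumes "bij h" shows "inj (\<lambda>x. h \<circ> x \<circ> inv h)"
proof (rule injI)
  fix a b assume e: "h \<circ> a \<circ> inv h = h \<circ> b \<circ> inv h"
  show "a = b"
  proof
    fix z
    have "(h \<circ> a \<circ> inv h) (h z) = (h \<circ> b \<circ> inv h) (h z)" using e by simp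
    hence "h (a z) = h (b z)" using assms bij_is_inj conj_app by metis
    thus "a z = b z" using assms bij_is_inj by (metis injD)
  qed
qed

lemma inv_fix: "inj h \<Longrightarrow> x a = a \<Longrightarrow> (h \<circ> x \<circ> inv h) (h a) = h a" by simp
lemma inv_mov: "inj h \<Longrightarrow> x a \<noteq> a \<Longrightarrow> (h \<circ> x \<circ> inv h) (h a) \<noteq> h a" by (simp add: inj_eq)

lemma double_count:
  assumes finE: "finite E" and finX: "finite X" and yX: "y \<in> X"
    and tr: "\<And>a b. a\<in>X \<Longrightarrow> b\<in>X \<Longrightarrow> \<exists>h\<in>H. h a = b"
    and bj: "\<And>h. h\<in>H \<Longrightarrow> bij h"
    and cl: "\<And>h x. h\<in>H \<Longrightarrow> x\<in>E \<Longrightarrow> h\<circ>x\<circ>inv h \<in> E"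
    and iv: "\<And>h x a. h\<in>H \<Longrightarrow> x\<in>E \<Longrightarrow> a\<in>X \<Longrightarrow> P x a \<Longrightarrow> P (h\<circ>x\<circ>inv h) (h a)"
    and cnt: "\<And>x. x\<in>E \<Longrightarrow> card {a\<in>X. P x a} = c"
  shows "card X * card {x\<in>E. P x y} = card E * c"
proof -
  have le: "card {x\<in>E. P x a} \<le> card {x\<in>E. P x b}" if a: "a\<in>X" and b: "b\<in>X" for a b
  proof -
    obtain h where h: "h\<in>H" "h a = b" using tr a b by blast
    have "inj_on (\<lambda>x. h \<circ> x \<circ> inv h) {x\<in>E. P x a}"
      using conj_inj[OF bj[OF h(1)]] by (simp add: inj_on_def inj_def)
    moreover have "(\<lambda>x. h \<circ> x \<circ> inv h) ` {x\<in>E. P x a} \<subseteq> {x\<in>E. P x b}"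
      using cl[OF h(1)] iv[OF h(1) _ a] h(2) by auto
    ultimately show ?thesis using finE by (intro card_inj_on_le) auto
  qed
  have const: "card {x\<in>E. P x a} = card {x\<in>E. P x y}" if "a\<in>X" for a
    using le[OF that yX] le[OF yX that] by simp
  have "card X * card {x\<in>E. P x y} = (\<Sum>a\<in>X. card {x\<in>E. P x a})"
    using const by simp
  also have "\<dots> = (\<Sum>a\<in>X. \<Sum>x\<in>E. if P x a then 1 else 0)"
    using finE by (simp add: sum.inter_filter[symmetric])
  also have "\<dots> = (\<Sum>x\<in>E. \<Sum>a\<in>X. if P x a then 1 else 0)"
    by (rule sum.swap)
  also have "\<dots> = (\<Sum>x\<in>E. card {a\<in>X. P x a})"
    using finX by (simp add: sum.inter_filter[symmetric])
  also have "\<dots> = card E * c" using cnt by simp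
  finally show ?thesis .
qed

lemma extend_list:
  assumes "finite \<Omega>" "distinct ys" "set ys \<subseteq> \<Omega>" "k \<le> card \<Omega>"
  shows "\<exists>zs. distinct zs \<and> set zs \<subseteq> \<Omega> - set ys \<and> length zs = k - length ys"
proof -
  have "card (\<Omega> - set ys) = card \<Omega> - length ys"
    using assms by (simp add: card_Diff_subset distinct_card)
  hence "k - length ys \<le> card (\<Omega> - set ys)" using assms by simp
  then obtain T where T: "T \<subseteq> \<Omega> - set ys" "card T = k - length ys"
    by (meson obtain_subset_with_card_n)
  have "finite T" using T assms(1) finite_subset by blast
  then obtain zs where "set zs = T" "distinct zs" using finite_distinct_list by blast
  thus ?thesis using T distinct_card by metis
qed

lemma tt_list:
  assumes fin: "finite \<Omega>" and tt: "t_transitive t \<Omega> G"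
    and d: "distinct ys" "distinct ys'" and s: "set ys \<subseteq> \<Omega>" "set ys' \<subseteq> \<Omega>"
    and l: "length ys = length ys'" "length ys \<le> t"
  shows "\<exists>g\<in>G. map g ys = ys'"
proof -
  have tn: "t \<le> card \<Omega>" using tt by (simp add: t_transitive_def)
  obtain zs where zs: "distinct zs" "set zs \<subseteq> \<Omega> - set ys" "length zs = t - length ys"
    using extend_list[OF fin d(1) s(1) tn] by blast
  obtain zs' where zs': "distinct zs'" "set zs' \<subseteq> \<Omega> - set ys'" "length zs' = t - length ys'"
    using extend_list[OF fin d(2) s(2) tn] by blast
  have "distinct (ys @ zs)" "distinct (ys' @ zs')" "length (ys@zs) = t" "length (ys'@zs') = t"
    "set (ys@zs) \<subseteq> \<Omega>" "set (ys'@zs') \<subseteq> \<Omega>" using zs zs' d s l by auto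
  then obtain g where g: "g\<in>G" "map g (ys@zs) = ys'@zs'"
    using tt unfolding t_transitive_def by blast
  hence "map g ys @ map g zs = ys' @ zs'" by simp
  hence "map g ys = ys'" using l by (simp add: append_eq_append_conv)
  thus ?thesis using g by blast
qed

lemma stab_trans:
  assumes fin: "finite \<Omega>" and tt: "t_transitive t \<Omega> G"
    and D: "D \<subseteq> \<Omega>" "card D + 1 \<le> t" and a: "a \<in> \<Omega> - D" and b: "b \<in> \<Omega> - D"
  shows "\<exists>h\<in>pw_stab G D. h a = b"
proof -
  have "finite D" using D fin finite_subset by blast
  then obtain xs where xs: "set xs = D" "distinct xs" using finite_distinct_list by blast
  have len: "length xs = card D" using xs distinct_card by metis
  obtain g where g: "g\<in>G" "map g (xs@[a]) = xs@[b]"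
    using tt_list[OF fin tt, of "xs@[a]" "xs@[b]"] xs a b D len by auto
  hence "map g xs = xs" "g a = b" by auto
  hence "\<forall>d\<in>D. g d = d" using xs by (metis map_eq_conv list.map_id id_apply)
  thus ?thesis using g \<open>g a = b\<close> by (auto simp: pw_stab_def)
qed

lemma real_conv: "(a::nat) * k = e * c \<Longrightarrow> a > 0 \<Longrightarrow> real k = real e * real c / real a"
proof -
  assume h: "a * k = e * c" "a > 0"
  hence "real a * real k = real e * real c" by (metis of_nat_mult)
  thus ?thesis using h(2) by (simp add: field_simps)
qed



theorem lemma2p5:
  fixes \<Omega> :: "'a set" and G :: "('a \<Rightarrow> 'a) set" and u :: "'a \<Rightarrow> 'a"
    and \<Delta> :: "'a set" and t :: nat
  assumes "finite \<Omega>"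
    and "perm_group \<Omega> G"
    and "t_transitive t \<Omega> G" and "t \<ge> 2"
    and "u \<in> G"
    and "\<Delta> \<subseteq> perm_supp u"
  defines "n \<equiv> card \<Omega>" and "m \<equiv> card (perm_supp u)" and "d \<equiv> card \<Delta>"
    and "E \<equiv> {g \<circ> u \<circ> inv g | g. g \<in> pw_stab G \<Delta>}"
  shows
   "(d \<le> t - 1 \<longrightarrow> (\<forall>\<gamma>\<in>\<Omega> - \<Delta>.
        real (card {x \<in> E. x \<gamma> = \<gamma>}) = real (card E) * (real n - real m) / (real n - real d) \<and>
        real (card {x \<in> E. x \<gamma> \<noteq> \<gamma>}) = real (card E) * (real m - real d) / (real n - real d)))
    \<and> (d \<le> t - 2 \<longrightarrow> (\<forall>\<gamma>\<in>\<Omega> - \<Delta>. \<forall>\<delta>\<in>\<Omega> - \<Delta>. \<gamma> \<noteq> \<delta> \<longrightarrow>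
        real (card {x \<in> E. \<gamma> \<in> perm_fix \<Omega> x \<and> \<delta> \<in> perm_supp x}) =
          real (card E) * ((real n - real m) * (real m - real d))
            / ((real n - real d) * (real n - real d - 1))))
    \<and> (d = 1 \<longrightarrow> (\<forall>\<gamma>\<in>\<Omega> - \<Delta>.
        real (card {x \<in> E. x \<gamma> \<in> \<Delta>}) = real (card E) * (1 / (real n - 1))))
    \<and> (d = 1 \<and> t \<ge> 3 \<longrightarrow> (\<forall>\<gamma>\<in>\<Omega> - \<Delta>. \<forall>\<delta>\<in>\<Omega> - \<Delta>. \<gamma> \<noteq> \<delta> \<longrightarrow>
        real (card {x \<in> E. x \<gamma> = \<delta>}) = real (card E) * ((real m - 2) / ((real n - 1) * (real n - 2)))))"
proof -
  note fin = assms(1) and tt = assms(3)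
  have Gp: "\<And>g. g\<in>G \<Longrightarrow> g permutes \<Omega>" and Gc: "\<And>g h. g\<in>G \<Longrightarrow> h\<in>G \<Longrightarrow> g\<circ>h \<in> G"
    and Gi: "\<And>g. g\<in>G \<Longrightarrow> inv g \<in> G"
    using assms(2) unfolding perm_group_def by auto
  have tn: "t \<le> n" using tt by (simp add: t_transitive_def n_def)
  have up: "u permutes \<Omega>" using Gp assms(5) .
  have suppO: "perm_supp u \<subseteq> \<Omega>" using up by (auto simp: perm_supp_def permutes_def)
  have finS: "finite (perm_supp u)" using suppO fin finite_subset by blast
  have finD: "finite \<Delta>" using assms(6) finS finite_subset by blast
  have dm: "d \<le> m" unfolding d_def m_def using assms(6) finS card_mono by blast
  have mn: "m \<le> n" unfolding n_def m_def using suppO fin card_mono by blast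
  have DO: "\<Delta> \<subseteq> \<Omega>" using assms(6) suppO by blast
  have cardOD: "card (\<Omega> - \<Delta>) = n - d" using DO finD by (simp add: card_Diff_subset n_def d_def)
  have Hbij: "\<And>h D. h \<in> pw_stab G D \<Longrightarrow> bij h" using Gp permutes_bij by (auto simp: pw_stab_def)
  have Hmono: "\<And>D D'. D \<subseteq> D' \<Longrightarrow> pw_stab G D' \<subseteq> pw_stab G D" by (auto simp: pw_stab_def)
  have Htr: "\<And>D a b. D \<subseteq> \<Omega> \<Longrightarrow> card D + 1 \<le> t \<Longrightarrow> a \<in> \<Omega> - D \<Longrightarrow> b \<in> \<Omega> - D \<Longrightarrow> \<exists>h\<in>pw_stab G D. h a = b"
    by (rule stab_trans[OF fin tt])
  have Hcl: "h \<circ> x \<circ> inv h \<in> E" if h: "h \<in> pw_stab G \<Delta>" and x: "x \<in> E" for h x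
  proof -
    obtain g where g: "g \<in> pw_stab G \<Delta>" "x = g \<circ> u \<circ> inv g" using x unfolding E_def by blast
    have hg: "h \<circ> g \<in> pw_stab G \<Delta>" using g(1) h Gc by (auto simp: pw_stab_def)
    have "inv (h \<circ> g) = inv g \<circ> inv h" by (rule o_inv_distrib[OF Hbij[OF h] Hbij[OF g(1)]])
    hence "h \<circ> x \<circ> inv h = (h \<circ> g) \<circ> u \<circ> inv (h \<circ> g)" using g(2) by (simp add: o_assoc)
    thus ?thesis using hg unfolding E_def by blast
  qed
  have Eperm: "x permutes \<Omega>" if x: "x \<in> E" for x
  proof -
    obtain g where g: "g \<in> pw_stab G \<Delta>" "x = g \<circ> u \<circ> inv g" using x unfolding E_def by blast
    have "g permutes \<Omega>" using g(1) Gp by (auto simp: pw_stab_def)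
    thus ?thesis using g(2) up by (simp add: permutes_compose permutes_inv)
  qed
  have Esupp: "card (perm_supp x) = m \<and> \<Delta> \<subseteq> perm_supp x \<and> perm_supp x \<subseteq> \<Omega>" if x: "x \<in> E" for x
  proof -
    obtain g where g: "g \<in> pw_stab G \<Delta>" "x = g \<circ> u \<circ> inv g" using x unfolding E_def by blast
    have gp: "g permutes \<Omega>" using g(1) Gp by (auto simp: pw_stab_def)
    have gi: "inj g" using gp permutes_inj by blast
    have i1: "\<And>b. inv g (g b) = b" using gp permutes_inverses by metis
    have i2: "\<And>a. g (inv g a) = a" using gp permutes_inverses by metis
    have "perm_supp x = g ` perm_supp u"
    proof (rule set_eqI)
      fix a
      have "a \<in> perm_supp x \<longleftrightarrow> g (u (inv g a)) \<noteq> g (inv g a)" using g(2) i2 by (simp add: perm_supp_def)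
      also have "\<dots> \<longleftrightarrow> inv g a \<in> perm_supp u" using gi by (simp add: perm_supp_def inj_eq)
      also have "\<dots> \<longleftrightarrow> a \<in> g ` perm_supp u"
      proof
        assume "inv g a \<in> perm_supp u" thus "a \<in> g ` perm_supp u" by (metis i2 imageI)
      next
        assume "a \<in> g ` perm_supp u" then obtain b where "b \<in> perm_supp u" "a = g b" by blast
        thus "inv g a \<in> perm_supp u" using i1 by simp
      qed
      finally show "a \<in> perm_supp x \<longleftrightarrow> a \<in> g ` perm_supp u" .
    qed
    hence c: "card (perm_supp x) = m" unfolding m_def by (simp add: card_image inj_on_subset[OF gi subset_UNIV])
    have "\<Delta> \<subseteq> perm_supp x"
    proof
      fix a assume a: "a \<in> \<Delta>"
      have ga: "g a = a" using g(1) a by (auto simp: pw_stab_def)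
      hence "inv g a = a" using i1 by metis
      moreover have "u a \<noteq> a" using a assms(6) by (auto simp: perm_supp_def)
      ultimately have "x a \<noteq> g a" using g(2) gi by (simp add: inj_eq)
      thus "a \<in> perm_supp x" using ga by (simp add: perm_supp_def)
    qed
    moreover have "perm_supp x \<subseteq> \<Omega>" using Eperm[OF x] by (auto simp: perm_supp_def permutes_def)
    ultimately show ?thesis using c by blast
  qed
  have finE: "finite E"
  proof -
    have "E \<subseteq> {p. p permutes \<Omega>}" using Eperm by blast
    thus ?thesis using finite_permutations[OF fin] finite_subset by blast
  qed
  have Hinj: "\<And>h D. h \<in> pw_stab G D \<Longrightarrow> inj h" using Hbij bij_is_inj by blast
  have trD: "\<exists>h\<in>pw_stab G \<Delta>. h a = b" if "d + 1 \<le> t" "a \<in> \<Omega> - \<Delta>" "b \<in> \<Omega> - \<Delta>" for a b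
    using Htr[OF DO _ that(2,3)] that(1) unfolding d_def by blast
  have bjD: "\<And>h. h \<in> pw_stab G \<Delta> \<Longrightarrow> bij h" using Hbij by blast
  have finOD: "finite (\<Omega> - \<Delta>)" using fin by simp
  have cntA: "card {a \<in> \<Omega> - \<Delta>. x a = a} = n - m" if x: "x \<in> E" for x
  proof -
    have "{a \<in> \<Omega> - \<Delta>. x a = a} = \<Omega> - perm_supp x" using Esupp[OF x] by (auto simp: perm_supp_def)
    have fs: "finite (perm_supp x)" using Esupp[OF x] fin finite_subset by blast
    thus ?thesis using Esupp[OF x] \<open>{a \<in> \<Omega> - \<Delta>. x a = a} = \<Omega> - perm_supp x\<close>
        by (simp add: card_Diff_subset n_def)
  qed
  have cntB: "card {a \<in> \<Omega> - \<Delta>. x a \<noteq> a} = m - d" if x: "x \<in> E" for x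
  proof -
    have "{a \<in> \<Omega> - \<Delta>. x a \<noteq> a} = perm_supp x - \<Delta>" using Esupp[OF x] by (auto simp: perm_supp_def)
    thus ?thesis using Esupp[OF x] finD
        by (simp add: card_Diff_subset d_def)
  qed
  have ivA: "(h \<circ> x \<circ> inv h) (h a) = h a" if "h \<in> pw_stab G \<Delta>" "x \<in> E" "a \<in> \<Omega> - \<Delta>" "x a = a" for h x a
    using inv_fix[of h x a, OF Hinj[OF that(1)] that(4)] .
  have ivB: "(h \<circ> x \<circ> inv h) (h a) \<noteq> h a" if "h \<in> pw_stab G \<Delta>" "x \<in> E" "a \<in> \<Omega> - \<Delta>" "x a \<noteq> a" for h x a
    using inv_mov[of h x a, OF Hinj[OF that(1)] that(4)] .
  have PA: "(n - d) * card {x \<in> E. x \<gamma> = \<gamma>} = card E * (n - m)" if "d + 1 \<le> t" "\<gamma> \<in> \<Omega> - \<Delta>" for \<gamma>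
  proof -
    have "card (\<Omega> - \<Delta>) * card {x \<in> E. (\<lambda>x a. x a = a) x \<gamma>} = card E * (n - m)"
      by (rule double_count[where P = "\<lambda>x a. x a = a", OF finE finOD that(2) trD[OF that(1)] bjD Hcl ivA cntA])
    thus ?thesis unfolding cardOD by simp
  qed
  have PB: "(n - d) * card {x \<in> E. x \<gamma> \<noteq> \<gamma>} = card E * (m - d)" if "d + 1 \<le> t" "\<gamma> \<in> \<Omega> - \<Delta>" for \<gamma>
  proof -
    have "card (\<Omega> - \<Delta>) * card {x \<in> E. (\<lambda>x a. x a \<noteq> a) x \<gamma>} = card E * (m - d)"
      by (rule double_count[where P = "\<lambda>x a. x a \<noteq> a", OF finE finOD that(2) trD[OF that(1)] bjD Hcl ivB cntB])
    thus ?thesis unfolding cardOD by simp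
  qed
  have dn: "d \<le> n" using dm mn by simp
  have part1: "d \<le> t - 1 \<longrightarrow> (\<forall>\<gamma>\<in>\<Omega> - \<Delta>.
        real (card {x \<in> E. x \<gamma> = \<gamma>}) = real (card E) * (real n - real m) / (real n - real d) \<and>
        real (card {x \<in> E. x \<gamma> \<noteq> \<gamma>}) = real (card E) * (real m - real d) / (real n - real d))"
  proof (intro impI ballI conjI)
    fix \<gamma> assume h: "d \<le> t - 1" "\<gamma> \<in> \<Omega> - \<Delta>"
    hence d1: "d + 1 \<le> t" using assms(4) by simp
    have npos: "0 < n - d" using d1 tn by simp
    show "real (card {x \<in> E. x \<gamma> = \<gamma>}) = real (card E) * (real n - real m) / (real n - real d)"
      using real_conv[OF PA[OF d1 h(2)] npos] by (simp add: of_nat_diff mn dn)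
    show "real (card {x \<in> E. x \<gamma> \<noteq> \<gamma>}) = real (card E) * (real m - real d) / (real n - real d)"
      using real_conv[OF PB[OF d1 h(2)] npos] by (simp add: of_nat_diff dm dn)
  qed
  have part2: "d \<le> t - 2 \<longrightarrow> (\<forall>\<gamma>\<in>\<Omega> - \<Delta>. \<forall>\<delta>\<in>\<Omega> - \<Delta>. \<gamma> \<noteq> \<delta> \<longrightarrow>
        real (card {x \<in> E. \<gamma> \<in> perm_fix \<Omega> x \<and> \<delta> \<in> perm_supp x}) =
          real (card E) * ((real n - real m) * (real m - real d))
            / ((real n - real d) * (real n - real d - 1)))"
  proof (intro impI ballI)
    fix \<gamma> \<delta> assume h: "d \<le> t - 2" "\<gamma> \<in> \<Omega> - \<Delta>" "\<delta> \<in> \<Omega> - \<Delta>" "\<gamma> \<noteq> \<delta>"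
    hence d2: "d + 2 \<le> t" using assms(4) by simp
    hence d1: "d + 1 \<le> t" by simp
    define E1 where "E1 = {x \<in> E. x \<gamma> = \<gamma>}"
    define X1 where "X1 = \<Omega> - insert \<gamma> \<Delta>"
    have finE1: "finite E1" using finE E1_def by simp
    have finX1: "finite X1" using fin X1_def by simp
    have dX1: "\<delta> \<in> X1" using h X1_def by simp
    have cI: "card (insert \<gamma> \<Delta>) = d + 1" using h(2) finD d_def by simp
    have IO: "insert \<gamma> \<Delta> \<subseteq> \<Omega>" using h(2) DO by simp
    have cX1: "card X1 = n - (d + 1)" unfolding X1_def using IO finD cI
      by (simp add: card_Diff_subset n_def)
    have tr1: "\<exists>h\<in>pw_stab G (insert \<gamma> \<Delta>). h a = b" if "a \<in> X1" "b \<in> X1" for a b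
      using Htr[OF IO _ that[unfolded X1_def]] cI d2 by simp
    have bj1: "\<And>h. h \<in> pw_stab G (insert \<gamma> \<Delta>) \<Longrightarrow> bij h" using Hbij by blast
    have sub1: "pw_stab G (insert \<gamma> \<Delta>) \<subseteq> pw_stab G \<Delta>" using Hmono by blast
    have cl1: "h \<circ> x \<circ> inv h \<in> E1" if hh: "h \<in> pw_stab G (insert \<gamma> \<Delta>)" and x: "x \<in> E1" for h x
    proof -
      have hg: "h \<gamma> = \<gamma>" using hh by (simp add: pw_stab_def)
      have "(h \<circ> x \<circ> inv h) (h \<gamma>) = h \<gamma>" using inv_fix[of h x \<gamma>, OF Hinj[OF hh]] x E1_def by simp
      moreover have "h \<circ> x \<circ> inv h \<in> E" using Hcl sub1 hh x E1_def by blast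
      ultimately show ?thesis using hg E1_def by simp
    qed
    have iv1: "(h \<circ> x \<circ> inv h) (h a) \<noteq> h a" if "h \<in> pw_stab G (insert \<gamma> \<Delta>)" "x \<in> E1" "a \<in> X1" "x a \<noteq> a" for h x a
      using inv_mov[of h x a, OF Hinj[OF that(1)] that(4)] .
    have cnt1: "card {a \<in> X1. x a \<noteq> a} = m - d" if x: "x \<in> E1" for x
    proof -
      have xE: "x \<in> E" "x \<gamma> = \<gamma>" using x E1_def by auto
      have "{a \<in> X1. x a \<noteq> a} = {a \<in> \<Omega> - \<Delta>. x a \<noteq> a}" using xE(2) X1_def by auto
      thus ?thesis using cntB[OF xE(1)] by simp
    qed
    have N: "(n - (d + 1)) * card {x \<in> E1. x \<delta> \<noteq> \<delta>} = card E1 * (m - d)"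
    proof -
      have "card X1 * card {x \<in> E1. (\<lambda>x a. x a \<noteq> a) x \<delta>} = card E1 * (m - d)"
        by (rule double_count[where P = "\<lambda>x a. x a \<noteq> a", OF finE1 finX1 dX1 tr1 bj1 cl1 iv1 cnt1])
      thus ?thesis unfolding cX1 by simp
    qed
    have seteq: "{x \<in> E. \<gamma> \<in> perm_fix \<Omega> x \<and> \<delta> \<in> perm_supp x} = {x \<in> E1. x \<delta> \<noteq> \<delta>}"
      using h(2) by (auto simp: E1_def perm_fix_def perm_supp_def)
    have npos: "0 < n - d" using d1 tn by simp
    have npos2: "0 < n - (d + 1)" using d2 tn by simp
    have r1: "real (card E1) = real (card E) * (real n - real m) / (real n - real d)"
      using real_conv[OF PA[OF d1 h(2)] npos] E1_def by (simp add: of_nat_diff mn dn)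
    have r2: "real (card {x \<in> E1. x \<delta> \<noteq> \<delta>}) = real (card E1) * (real m - real d) / (real n - real d - 1)"
      using real_conv[OF N npos2] npos2 by (simp add: of_nat_diff dm)
    have ne1: "real n - real d \<noteq> 0" "real n - real d - 1 \<noteq> 0" using npos npos2 by auto
    show "real (card {x \<in> E. \<gamma> \<in> perm_fix \<Omega> x \<and> \<delta> \<in> perm_supp x}) =
          real (card E) * ((real n - real m) * (real m - real d))
            / ((real n - real d) * (real n - real d - 1))"
      unfolding seteq r2 r1 using ne1 by (simp add: field_simps)
  qed
  have PC: "(n - 1) * card {x \<in> E. x \<gamma> \<in> \<Delta>} = card E" if d1: "d = 1" and g: "\<gamma> \<in> \<Omega> - \<Delta>" for \<gamma>
  proof -
    obtain \<alpha> where al: "\<Delta> = {\<alpha>}" using d1 unfolding d_def by (metis card_1_singletonE)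
    have aO: "\<alpha> \<in> \<Omega>" using al DO by simp
    have dt: "d + 1 \<le> t" using d1 assms(4) by simp
    have iv: "(h \<circ> x \<circ> inv h) (h a) \<in> \<Delta>" if "h \<in> pw_stab G \<Delta>" "x \<in> E" "a \<in> \<Omega> - \<Delta>" "x a \<in> \<Delta>" for h x a
    proof -
      have "(h \<circ> x \<circ> inv h) (h a) = h (x a)" using conj_app[of h x a, OF Hinj[OF that(1)]] .
      also have "\<dots> = x a" using that(1,4) by (simp add: pw_stab_def)
      finally show ?thesis using that(4) by simp
    qed
    have cnt: "card {a \<in> \<Omega> - \<Delta>. x a \<in> \<Delta>} = 1" if x: "x \<in> E" for x
    proof -
      have xp: "x permutes \<Omega>" using Eperm[OF x] .
      have xa: "x \<alpha> \<noteq> \<alpha>" using Esupp[OF x] al by (auto simp: perm_supp_def)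
      have i1: "x (inv x \<alpha>) = \<alpha>" using xp permutes_inverses(1) by metis
      have i2: "\<And>b. inv x (x b) = b" using xp permutes_inverses(2) by metis
      have iO: "inv x \<alpha> \<in> \<Omega>" using permutes_in_image[OF permutes_inv[OF xp]] aO by simp
      have "{a \<in> \<Omega> - \<Delta>. x a \<in> \<Delta>} = {inv x \<alpha>}"
      proof (rule set_eqI, rule iffI)
        fix a assume "a \<in> {a \<in> \<Omega> - \<Delta>. x a \<in> \<Delta>}"
        hence "x a = \<alpha>" using al by simp
        thus "a \<in> {inv x \<alpha>}" using i2 by (metis singletonI)
      next
        fix a assume "a \<in> {inv x \<alpha>}"
        hence a: "a = inv x \<alpha>" by simp
        have "a \<noteq> \<alpha>" using a i1 xa by metis
        thus "a \<in> {a \<in> \<Omega> - \<Delta>. x a \<in> \<Delta>}" using a i1 iO al by simp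
      qed
      thus ?thesis by simp
    qed
    have "card (\<Omega> - \<Delta>) * card {x \<in> E. (\<lambda>x a. x a \<in> \<Delta>) x \<gamma>} = card E * 1"
      by (rule double_count[where P = "\<lambda>x a. x a \<in> \<Delta>", OF finE finOD g trD[OF dt] bjD Hcl iv cnt])
    thus ?thesis unfolding cardOD d1 by simp
  qed
  have part3: "d = 1 \<longrightarrow> (\<forall>\<gamma>\<in>\<Omega> - \<Delta>.
        real (card {x \<in> E. x \<gamma> \<in> \<Delta>}) = real (card E) * (1 / (real n - 1)))"
  proof (intro impI ballI)
    fix \<gamma> assume h: "d = 1" "\<gamma> \<in> \<Omega> - \<Delta>"
    have npos: "0 < n - 1" using h(1) assms(4) tn by simp
    have "real (card {x \<in> E. x \<gamma> \<in> \<Delta>}) = real (card E) * real 1 / real (n - 1)"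
      using real_conv[of "n - 1" _ "card E" 1] PC[OF h] npos by simp
    thus "real (card {x \<in> E. x \<gamma> \<in> \<Delta>}) = real (card E) * (1 / (real n - 1))"
      using npos by (simp add: of_nat_diff)
  qed
  have part4: "d = 1 \<and> t \<ge> 3 \<longrightarrow> (\<forall>\<gamma>\<in>\<Omega> - \<Delta>. \<forall>\<delta>\<in>\<Omega> - \<Delta>. \<gamma> \<noteq> \<delta> \<longrightarrow>
        real (card {x \<in> E. x \<gamma> = \<delta>}) = real (card E) * ((real m - 2) / ((real n - 1) * (real n - 2))))"
  proof (intro impI ballI)
    fix \<gamma> \<delta> assume hd: "d = 1 \<and> t \<ge> 3" and h: "\<gamma> \<in> \<Omega> - \<Delta>" "\<delta> \<in> \<Omega> - \<Delta>" "\<gamma> \<noteq> \<delta>"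
    have d1: "d = 1" and t3: "t \<ge> 3" using hd by auto
    obtain \<alpha> where al: "\<Delta> = {\<alpha>}" using d1 unfolding d_def by (metis card_1_singletonE)
    have dt: "d + 1 \<le> t" using d1 assms(4) by simp
    have n3: "n \<ge> 3" using t3 tn by simp
    define E2 where "E2 = {x \<in> E. x \<gamma> \<noteq> \<gamma> \<and> x \<gamma> \<notin> \<Delta>}"
    define X2 where "X2 = \<Omega> - insert \<gamma> \<Delta>"
    have finE2: "finite E2" using finE E2_def by simp
    have finX2: "finite X2" using fin X2_def by simp
    have dX2: "\<delta> \<in> X2" using h X2_def by simp
    have cI: "card (insert \<gamma> \<Delta>) = 2" using h(1) al by auto
    have IO: "insert \<gamma> \<Delta> \<subseteq> \<Omega>" using h(1) DO by simp
    have cX2: "card X2 = n - 2" unfolding X2_def using IO finD cI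
      by (simp add: card_Diff_subset n_def)
    have tr2: "\<exists>h\<in>pw_stab G (insert \<gamma> \<Delta>). h a = b" if "a \<in> X2" "b \<in> X2" for a b
      using Htr[OF IO _ that[unfolded X2_def]] cI t3 by simp
    have bj2: "\<And>h. h \<in> pw_stab G (insert \<gamma> \<Delta>) \<Longrightarrow> bij h" using Hbij by blast
    have sub2: "pw_stab G (insert \<gamma> \<Delta>) \<subseteq> pw_stab G \<Delta>" using Hmono by blast
    have cl2: "h \<circ> x \<circ> inv h \<in> E2" if hh: "h \<in> pw_stab G (insert \<gamma> \<Delta>)" and x: "x \<in> E2" for h x
    proof -
      have hg: "h \<gamma> = \<gamma>" and ha: "h \<alpha> = \<alpha>" using hh al by (auto simp: pw_stab_def)
      have hi: "inj h" using Hinj[OF hh] .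
      have e: "(h \<circ> x \<circ> inv h) \<gamma> = h (x \<gamma>)" using conj_app[of h x \<gamma>, OF hi] hg by simp
      have "h (x \<gamma>) \<noteq> \<gamma>" using x E2_def hg hi by (metis (mono_tags, lifting) injD mem_Collect_eq)
      moreover have "h (x \<gamma>) \<noteq> \<alpha>" using x E2_def ha hi al by (metis (mono_tags, lifting) injD mem_Collect_eq singletonI)
      moreover have "h \<circ> x \<circ> inv h \<in> E" using Hcl sub2 hh x E2_def by blast
      ultimately show ?thesis using e al E2_def by simp
    qed
    have iv2: "(h \<circ> x \<circ> inv h) \<gamma> = h a" if "h \<in> pw_stab G (insert \<gamma> \<Delta>)" "x \<in> E2" "a \<in> X2" "x \<gamma> = a" for h x a
    proof -
      have hg: "h \<gamma> = \<gamma>" using that(1) by (simp add: pw_stab_def)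
      have "(h \<circ> x \<circ> inv h) (h \<gamma>) = h (x \<gamma>)" using conj_app[of h x \<gamma>, OF Hinj[OF that(1)]] .
      thus ?thesis using hg that(4) by simp
    qed
    have cnt2: "card {a \<in> X2. x \<gamma> = a} = 1" if x: "x \<in> E2" for x
    proof -
      have xE: "x \<in> E" using x E2_def by simp
      have "x \<gamma> \<in> \<Omega>" using permutes_in_image[OF Eperm[OF xE]] h(1) by simp
      hence "x \<gamma> \<in> X2" using x E2_def X2_def by simp
      hence "{a \<in> X2. x \<gamma> = a} = {x \<gamma>}" by auto
      thus ?thesis by simp
    qed
    have "card X2 * card {x \<in> E2. (\<lambda>x a. x \<gamma> = a) x \<delta>} = card E2 * 1"
      apply (rule double_count[where P = "\<lambda>x a. x \<gamma> = a" and H = "pw_stab G (insert \<gamma> \<Delta>)" and X = X2 and E = E2 and c = 1 and y = \<delta>])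
             apply (rule finE2)
            apply (rule finX2)
           apply (rule dX2)
          apply (rule tr2, assumption+)
         apply (rule bj2, assumption)
        apply (rule cl2, assumption+)
       apply (rule iv2, assumption+)
      apply (rule cnt2, assumption)
      done
    hence N: "(n - 2) * card {x \<in> E2. x \<gamma> = \<delta>} = card E2" unfolding cX2 by simp
    have seteq: "{x \<in> E2. x \<gamma> = \<delta>} = {x \<in> E. x \<gamma> = \<delta>}" using h al E2_def by auto
    have E2eq: "E2 = {x \<in> E. x \<gamma> \<noteq> \<gamma>} - {x \<in> E. x \<gamma> \<in> \<Delta>}" using E2_def by auto
    have subs: "{x \<in> E. x \<gamma> \<in> \<Delta>} \<subseteq> {x \<in> E. x \<gamma> \<noteq> \<gamma>}" using h(1) by auto
    have cE2: "card E2 = card {x \<in> E. x \<gamma> \<noteq> \<gamma>} - card {x \<in> E. x \<gamma> \<in> \<Delta>}"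
      unfolding E2eq using subs finE by (simp add: card_Diff_subset)
    have le: "card {x \<in> E. x \<gamma> \<in> \<Delta>} \<le> card {x \<in> E. x \<gamma> \<noteq> \<gamma>}" using subs finE by (simp add: card_mono)
    have npos: "0 < n - 1" using n3 by simp
    have npos2: "0 < n - 2" using n3 by simp
    have g1: "\<gamma> \<in> \<Omega> - \<Delta>" using h(1) .
    have r1: "real (card {x \<in> E. x \<gamma> \<noteq> \<gamma>}) = real (card E) * (real m - 1) / (real n - 1)"
      using real_conv[OF PB[OF dt g1]] npos d1 dm by (simp add: of_nat_diff)
    have r2: "real (card {x \<in> E. x \<gamma> \<in> \<Delta>}) = real (card E) / (real n - 1)"
      using real_conv[of "n - 1" _ "card E" 1] PC[OF d1 g1] npos by (simp add: of_nat_diff)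
    have r3: "real (card E2) = real (card E) * (real m - 1) / (real n - 1) - real (card E) / (real n - 1)"
      using cE2 le r1 r2 by (simp add: of_nat_diff)
    have r4: "real (card {x \<in> E. x \<gamma> = \<delta>}) = real (card E2) / (real n - 2)"
      using real_conv[of "n - 2" _ "card E2" 1] N npos2 seteq by (simp add: of_nat_diff)
    have ne: "real n - 1 \<noteq> 0" "real n - 2 \<noteq> 0" using n3 by auto
    show "real (card {x \<in> E. x \<gamma> = \<delta>}) = real (card E) * ((real m - 2) / ((real n - 1) * (real n - 2)))"
    proof -
      have r5: "real (card E2) = real (card E) * (real m - 2) / (real n - 1)"
      proof -
        have "real (card E) * (real m - 1) - real (card E) = real (card E) * (real m - 2)"
          by (simp add: algebra_simps)
        thus ?thesis unfolding r3 by (metis diff_divide_distrib)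
      qed
      show ?thesis unfolding r4 r5 by (simp add: divide_divide_eq_left)
    qed
  qed
  show ?thesis using part1 part2 part3 part4 by blast
qed

end
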